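(* Let $G$ be a bipartite TRVG with respect to the torus, with a rectangle representation on the torus in which the rectangles of one part are $g_1,\dots,g_p$ and the rectangles of the other part are $r_1,\dots,r_q$. If, for each $i\in\{1,\dots,p\}$, $g_i$ sees exactly $\alpha_i$ of the rectangles $r_1,\dots,r_q$ horizontally, then \[ q\ \ge\ \alpha_1+\alpha_2+\cdots+\alpha_p-p. \]
   Context: View the torus as an axis-parallel rectangle $[0,W]\times[0,H]$ with opposite sides identified; horizontal lines $y=c$ and vertical lines $x=c$ are closed curves on it. A graph $G$ is a TRVG with respect to the torus if its vertices can be represented by a collection of pairwise non-overlapping axis-parallel rectangles on this torus (possibly wrapping across the identified sides), one per vertex, such that two distinct vertices are adjacent if and only if some horizontal or vertical line of the torus intersects the interiors of both of their rectangles (other rectangles do not block visibility). Two rectangles see each other horizontally if some horizontal line of the torus meets the interiors of both. *)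

theory Defs
  imports Main "HOL.Real"
begin

text \<open>The torus is [0,W] x [0,H] with opposite sides identified; we work with
  periodic coordinates in the plane: a point (x,y) of the plane represents the torus
  point (x mod W, y mod H).  An axis-parallel rectangle on the torus is given by a
  lower-left corner (tx, ty) and side lengths tw, th with 0 < tw < W and 0 < th < H;
  it may wrap across the identified sides.\<close>

record trect =
  tx :: real
  ty :: real
  tw :: real
  th :: real

definition valid_trect :: "real \<Rightarrow> real \<Rightarrow> trect \<Rightarrow> bool" where
  "valid_trect W H R \<longleftrightarrow> 0 < tw R \<and> tw R < W \<and> 0 < th R \<and> th R < H"

definition in_open_arc :: "real \<Rightarrow> real \<Rightarrow> real \<Rightarrow> real \<Rightarrow> bool" where
  "in_open_arc L a l t \<longleftrightarrow> (\<exists>k::int. a < t + of_int k * L \<and> t + of_int k * L < a + l)"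

definition trect_interior :: "real \<Rightarrow> real \<Rightarrow> trect \<Rightarrow> (real \<times> real) set" where
  "trect_interior W H R =
     {(x, y). in_open_arc W (tx R) (tw R) x \<and> in_open_arc H (ty R) (th R) y}"

definition sees_horiz :: "real \<Rightarrow> real \<Rightarrow> trect \<Rightarrow> trect \<Rightarrow> bool" where
  "sees_horiz W H R1 R2 \<longleftrightarrow>
     (\<exists>c. (\<exists>x. (x, c) \<in> trect_interior W H R1) \<and> (\<exists>x. (x, c) \<in> trect_interior W H R2))"

definition sees_vert :: "real \<Rightarrow> real \<Rightarrow> trect \<Rightarrow> trect \<Rightarrow> bool" where
  "sees_vert W H R1 R2 \<longleftrightarrow>
     (\<exists>c. (\<exists>y. (c, y) \<in> trect_interior W H R1) \<and> (\<exists>y. (c, y) \<in> trect_interior W H R2))"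

definition trvg_rep :: "real \<Rightarrow> real \<Rightarrow> 'v set \<Rightarrow> ('v \<Rightarrow> 'v \<Rightarrow> bool) \<Rightarrow> ('v \<Rightarrow> trect) \<Rightarrow> bool" where
  "trvg_rep W H V E rep \<longleftrightarrow>
     (\<forall>v\<in>V. valid_trect W H (rep v)) \<and>
     (\<forall>u\<in>V. \<forall>v\<in>V. u \<noteq> v \<longrightarrow> trect_interior W H (rep u) \<inter> trect_interior W H (rep v) = {}) \<and>
     (\<forall>u\<in>V. \<forall>v\<in>V. u \<noteq> v \<longrightarrow>
        (E u v \<longleftrightarrow> sees_horiz W H (rep u) (rep v) \<or> sees_vert W H (rep u) (rep v)))"

definition simple_graph :: "'v set \<Rightarrow> ('v \<Rightarrow> 'v \<Rightarrow> bool) \<Rightarrow> bool" where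
  "simple_graph V E \<longleftrightarrow> finite V \<and> (\<forall>u v. E u v \<longrightarrow> E v u) \<and> (\<forall>v. \<not> E v v) \<and>
     (\<forall>u v. E u v \<longrightarrow> u \<in> V \<and> v \<in> V)"

end

theory Submission
  imports Defs
begin

definition hoa :: "real \<Rightarrow> real \<Rightarrow> real \<Rightarrow> real \<Rightarrow> bool" where
  "hoa L a l t \<longleftrightarrow> (\<exists>k::int. a < t + of_int k * L \<and> t + of_int k * L \<le> a + l)"

lemma arc_overlap:
  assumes "in_open_arc L a l t" "in_open_arc L b m t"
  shows "hoa L b m (a+l) \<or> hoa L a l (b+m)"
proof -
  obtain k :: int where k: "a < t + of_int k * L" "t + of_int k * L < a + l"
    using assms(1) unfolding in_open_arc_def by blast
  obtain k' :: int where k': "b < t + of_int k' * L" "t + of_int k' * L < b + m"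
    using assms(2) unfolding in_open_arc_def by blast
  have ee: "of_int (k' - k) * L = of_int k' * L - of_int k * L"
    "of_int (k - k') * L = of_int k * L - of_int k' * L"
    by (simp add: left_diff_distrib)+
  show ?thesis
  proof (cases "a - of_int k * L + l \<le> b - of_int k' * L + m")
    case c1: True
    have "b < a + l + of_int (k' - k) * L \<and> a + l + of_int (k' - k) * L \<le> b + m"
      unfolding ee using c1 k k' by linarith
    then show ?thesis unfolding hoa_def by blast
  next
    case c2: False
    have "a < b + m + of_int (k - k') * L \<and> b + m + of_int (k - k') * L \<le> a + l"
      unfolding ee using c2 k k' by linarith
    then show ?thesis unfolding hoa_def by blast
  qed
qed

lemma hoa_common:
  assumes "hoa L b m e" "hoa L b' m' e"
  shows "\<exists>t. in_open_arc L b m t \<and> in_open_arc L b' m' t"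
proof -
  obtain k :: int where k: "b < e + of_int k * L" "e + of_int k * L \<le> b + m"
    using assms(1) unfolding hoa_def by blast
  obtain k' :: int where k': "b' < e + of_int k' * L" "e + of_int k' * L \<le> b' + m'"
    using assms(2) unfolding hoa_def by blast
  define eps where "eps = min (e + of_int k * L - b) (e + of_int k' * L - b') / 2"
  have "eps > 0" using k k' unfolding eps_def by simp
  have e1: "eps < e + of_int k * L - b" "eps < e + of_int k' * L - b'"
  proof -
    have "eps \<le> (e + of_int k * L - b) / 2" "eps \<le> (e + of_int k' * L - b') / 2"
      unfolding eps_def by (simp_all add: divide_right_mono)
    thus "eps < e + of_int k * L - b" using k by argo
    show "eps < e + of_int k' * L - b'" using k' \<open>eps \<le> (e + of_int k' * L - b') / 2\<close> by argo
  qed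
  have "in_open_arc L b m (e - eps)" unfolding in_open_arc_def
    apply (rule exI[of _ k]) using k \<open>eps > 0\<close> e1 by linarith
  moreover have "in_open_arc L b' m' (e - eps)" unfolding in_open_arc_def
    apply (rule exI[of _ k']) using k' \<open>eps > 0\<close> e1 by linarith
  ultimately show ?thesis by blast
qed

lemma sh_iff:
  assumes "valid_trect W H R1" "valid_trect W H R2"
  shows "sees_horiz W H R1 R2 \<longleftrightarrow>
    (\<exists>c. in_open_arc H (ty R1) (th R1) c \<and> in_open_arc H (ty R2) (th R2) c)"
proof -
  have x: "in_open_arc W (tx R) (tw R) (tx R + tw R / 2)" if "valid_trect W H R" for R
    unfolding in_open_arc_def
    apply (rule exI[of _ 0]) using that unfolding valid_trect_def by simp
  show ?thesis
    unfolding sees_horiz_def trect_interior_def using x assms by blast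
qed

lemma card_le1:
  assumes "\<And>x y. x \<in> X \<Longrightarrow> y \<in> X \<Longrightarrow> x = y"
  shows "card X \<le> 1"
  using assms by (metis card_le_Suc0_iff_eq card.infinite le0 One_nat_def)

theorem lemma3:
  fixes W H :: real
    and V :: "'v set" and E :: "'v \<Rightarrow> 'v \<Rightarrow> bool" and rep :: "'v \<Rightarrow> trect"
    and g r :: "nat \<Rightarrow> 'v" and p q :: nat
  assumes "0 < W" and "0 < H"
    and "simple_graph V E"
    and "trvg_rep W H V E rep"
    and "V = g ` {..<p} \<union> r ` {..<q}"
    and "inj_on g {..<p}" and "inj_on r {..<q}"
    and "g ` {..<p} \<inter> r ` {..<q} = {}"
    and "\<forall>i<p. \<forall>j<p. \<not> E (g i) (g j)"
    and "\<forall>i<q. \<forall>j<q. \<not> E (r i) (r j)"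
  shows "int q \<ge> (\<Sum>i<p. int (card {j. j < q \<and> sees_horiz W H (rep (g i)) (rep (r j))})) - int p"
proof -
  define a where "a i = ty (rep (g i))" for i
  define l where "l i = th (rep (g i))" for i
  define b where "b j = ty (rep (r j))" for j
  define m where "m j = th (rep (r j))" for j
  have val: "valid_trect W H (rep v)" if "v \<in> V" for v
    using assms(4) that unfolding trvg_rep_def by blast
  have valg: "valid_trect W H (rep (g i))" if "i < p" for i
    using val assms(5) that by blast
  have valr: "valid_trect W H (rep (r j))" if "j < q" for j
    using val assms(5) that by blast
  have Gdisj: "i = i'" if "i < p" "i' < p" "in_open_arc H (a i) (l i) c"
    "in_open_arc H (a i') (l i') c" for i i' c
  proof (rule ccontr)
    assume ne: "i \<noteq> i'"
    hence "g i \<noteq> g i'" using assms(6) that(1,2) by (meson inj_on_def lessThan_iff)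
    moreover have "g i \<in> V" "g i' \<in> V" using assms(5) that(1,2) by auto
    ultimately have "E (g i) (g i') \<longleftrightarrow> sees_horiz W H (rep (g i)) (rep (g i')) \<or> sees_vert W H (rep (g i)) (rep (g i'))"
      using assms(4) unfolding trvg_rep_def by blast
    moreover have "sees_horiz W H (rep (g i)) (rep (g i'))"
      using sh_iff[OF valg[OF that(1)] valg[OF that(2)]] that unfolding a_def l_def by blast
    ultimately show False using assms(9) that(1,2) by blast
  qed
  have Rdisj: "j = j'" if "j < q" "j' < q" "in_open_arc H (b j) (m j) c"
    "in_open_arc H (b j') (m j') c" for j j' c
  proof (rule ccontr)
    assume ne: "j \<noteq> j'"
    hence "r j \<noteq> r j'" using assms(7) that(1,2) by (meson inj_on_def lessThan_iff)
    moreover have "r j \<in> V" "r j' \<in> V" using assms(5) that(1,2) by auto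
    ultimately have "E (r j) (r j') \<longleftrightarrow> sees_horiz W H (rep (r j)) (rep (r j')) \<or> sees_vert W H (rep (r j)) (rep (r j'))"
      using assms(4) unfolding trvg_rep_def by blast
    moreover have "sees_horiz W H (rep (r j)) (rep (r j'))"
      using sh_iff[OF valr[OF that(1)] valr[OF that(2)]] that unfolding b_def m_def by blast
    ultimately show False using assms(10) that(1,2) by blast
  qed
  define S where "S i = {j. j < q \<and> sees_horiz W H (rep (g i)) (rep (r j))}" for i
  define A where "A i = {j. j < q \<and> hoa H (b j) (m j) (a i + l i)}" for i
  define B where "B i = {j. j < q \<and> hoa H (a i) (l i) (b j + m j)}" for i
  have SAB: "S i \<subseteq> A i \<union> B i" if ip: "i < p" for i
  proof
    fix j assume "j \<in> S i"
    hence j: "j < q" "sees_horiz W H (rep (g i)) (rep (r j))" unfolding S_def by auto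
    then obtain c where "in_open_arc H (a i) (l i) c" "in_open_arc H (b j) (m j) c"
      using sh_iff[OF valg[OF ip] valr[OF j(1)]] unfolding a_def l_def b_def m_def by blast
    from arc_overlap[OF this] j(1) show "j \<in> A i \<union> B i" unfolding A_def B_def by auto
  qed
  have A1: "card (A i) \<le> 1" for i
    apply (rule card_le1)
    unfolding A_def using hoa_common Rdisj by blast
  have cardS: "card (S i) \<le> 1 + card (B i)" if "i < p" for i
  proof -
    have "card (S i) \<le> card (A i \<union> B i)"
      apply (rule card_mono) apply (simp add: A_def B_def) using SAB[OF that] by blast
    also have "\<dots> \<le> card (A i) + card (B i)" by (rule card_Un_le)
    finally show ?thesis using A1[of i] by linarith
  qed
  have col: "card {i. i < p \<and> hoa H (a i) (l i) (b j + m j)} \<le> 1" for j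
    apply (rule card_le1) using hoa_common Gdisj by blast
  have cB: "card (B i) = (\<Sum>j<q. if hoa H (a i) (l i) (b j + m j) then 1 else 0)" for i
  proof -
    have "B i = {j \<in> {..<q}. hoa H (a i) (l i) (b j + m j)}" unfolding B_def by auto
    thus ?thesis by (simp add: sum.If_cases Collect_conj_eq lessThan_def)
  qed
  have "(\<Sum>i<p. card (B i)) = (\<Sum>j<q. \<Sum>i<p. (if hoa H (a i) (l i) (b j + m j) then 1 else 0))"
    unfolding cB by (rule sum.swap)
  also have "\<dots> \<le> (\<Sum>j<q. (1::nat))"
  proof (rule sum_mono)
    fix j
    have "{..<p} \<inter> {i. hoa H (a i) (l i) (b j + m j)} = {i. i < p \<and> hoa H (a i) (l i) (b j + m j)}" by auto
    hence "(\<Sum>i<p. (if hoa H (a i) (l i) (b j + m j) then 1 else 0)) = card {i. i < p \<and> hoa H (a i) (l i) (b j + m j)}"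
      by (simp add: sum.If_cases)
    thus "(\<Sum>i<p. (if hoa H (a i) (l i) (b j + m j) then 1 else 0)) \<le> (1::nat)" using col[of j] by simp
  qed
  finally have sB: "(\<Sum>i<p. card (B i)) \<le> q" by simp
  have "(\<Sum>i<p. card (S i)) \<le> (\<Sum>i<p. 1 + card (B i))"
    by (rule sum_mono) (use cardS in auto)
  also have "\<dots> = p + (\<Sum>i<p. card (B i))" by (simp only: sum.distrib sum_constant card_lessThan mult_1_right of_nat_id)
  finally have "(\<Sum>i<p. card (S i)) \<le> p + q" using sB by linarith
  hence "int (\<Sum>i<p. card (S i)) \<le> int p + int q" by linarith
  moreover have "(\<Sum>i<p. int (card (S i))) = int (\<Sum>i<p. card (S i))"
    by (rule of_nat_sum[symmetric])
  ultimately show ?thesis unfolding S_def by linarith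
qed

end
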